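(* Let $(X_{1,\infty},f_{1,\infty})$ and $(Y_{1,\infty},g_{1,\infty})$ be equicontinuous topological nonautonomous dynamical systems, and let $\pi_{1,\infty}=\{\pi_n\}$, $\pi_n:X_n\to Y_n$, be an equicontinuous sequence of maps with $\pi_{n+1}\circ f_n=g_n\circ\pi_n$ for all $n\ge1$. Let $\mu_{1,\infty}$ be an $f_{1,\infty}$-invariant sequence of Borel probability measures and $\nu_n:=\pi_n\mu_n$. Then $\nu_{1,\infty}=\{\nu_n\}$ is $g_{1,\infty}$-invariant, and for every $\{\mathcal{Q}_n\}\in\mathcal{E}_{\mathrm{M}}(g_{1,\infty},\nu_{1,\infty})$ the sequence $\{\pi_n^{-1}(\mathcal{Q}_n)\}$ belongs to $\mathcal{E}_{\mathrm{M}}(f_{1,\infty},\mu_{1,\infty})$. Consequently \[ h_{\mathcal{E}_{\mathrm{M}}(g_{1,\infty},\nu_{1,\infty})}(g_{1,\infty})\le h_{\mathcal{E}_{\mathrm{M}}(f_{1,\infty},\mu_{1,\infty})}(f_{1,\infty}). \]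
   Context: Topological NDS: compact metric spaces $X_n$ and continuous maps $f_n:X_n\to X_{n+1}$. A sequence of maps $\{h_n:X_n\to Z_n\}$ between metric spaces is equicontinuous if for every $\varepsilon>0$ there is $\delta>0$ with $d(h_nx,h_ny)<\varepsilon$ whenever $d(x,y)<\delta$, uniformly in $n$. Invariance: $f_n\mu_n=\mu_{n+1}$ (push-forward). $\pi_n^{-1}(\mathcal{Q}_n)=\{\pi_n^{-1}(Q):Q\in\mathcal{Q}_n\}$. Misiurewicz class $\mathcal{E}_{\mathrm{M}}(f_{1,\infty},\mu_{1,\infty})$: sequences $\{\mathcal{P}_n\}$ of finite Borel partitions $\mathcal{P}_n=\{P_{n,1},\dots,P_{n,k_n}\}$ of $X_n$ with $\sup_nk_n<\infty$ such that for every $\varepsilon>0$ there exist $\delta>0$ and compact $C_{n,i}\subset P_{n,i}$ with, for all $n$: (a) $\mu_n(P_{n,i}\setminus C_{n,i})\le\varepsilon$; (b) the distance between points of $C_{n,i}$ and $C_{n,j}$, $i\ne j$, is $\ge\delta$. Entropy: $h(f_{1,\infty};\mathcal{P}_{1,\infty})=\limsup_n\frac1nH_{\mu_1}(\bigvee_{i=0}^{n-1}f_1^{-i}\mathcal{P}_{i+1})$ with $H_\mu(\mathcal{P})=-\sum_P\mu(P)\log\mu(P)$, $f_1^i=f_i\circ\cdots\circ f_1$; $h_{\mathcal{E}}(f_{1,\infty})=\sup_{\mathcal{P}_{1,\infty}\in\mathcal{E}}h(f_{1,\infty};\mathcal{P}_{1,\infty})$ (analogously for $g$ with $\nu_1$).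 *)

theory Defs
  imports "HOL-Probability.Probability"
begin

text \<open>Nonautonomous systems are indexed from 0 (the paper indexes from 1).
  The spaces X n are compact subsets of an ambient metric space type.\<close>

definition equicontinuous_seq :: "(nat \<Rightarrow> 'a::metric_space set) \<Rightarrow> (nat \<Rightarrow> 'a \<Rightarrow> 'b::metric_space) \<Rightarrow> bool" where
  "equicontinuous_seq X h \<longleftrightarrow>
     (\<forall>\<epsilon>>0. \<exists>\<delta>>0. \<forall>n. \<forall>x\<in>X n. \<forall>y\<in>X n. dist x y < \<delta> \<longrightarrow> dist (h n x) (h n y) < \<epsilon>)"

definition topological_NDS :: "(nat \<Rightarrow> 'a::metric_space set) \<Rightarrow> (nat \<Rightarrow> 'a \<Rightarrow> 'a) \<Rightarrow> bool" where
  "topological_NDS X f \<longleftrightarrow>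
     (\<forall>n. compact (X n) \<and> continuous_on (X n) (f n) \<and> f n ` X n \<subseteq> X (Suc n))"

abbreviation borel_on :: "'a::metric_space set \<Rightarrow> 'a measure" where
  "borel_on S \<equiv> restrict_space borel S"

definition invariant_measures :: "(nat \<Rightarrow> 'a::metric_space set) \<Rightarrow> (nat \<Rightarrow> 'a \<Rightarrow> 'a) \<Rightarrow> (nat \<Rightarrow> 'a measure) \<Rightarrow> bool" where
  "invariant_measures X f \<mu> \<longleftrightarrow>
     (\<forall>n. prob_space (\<mu> n) \<and> sets (\<mu> n) = sets (borel_on (X n))
          \<and> distr (\<mu> n) (borel_on (X (Suc n))) (f n) = \<mu> (Suc n))"

text \<open>Finite Borel partition (cells are allowed to be empty).\<close>
definition borel_partition :: "'a::metric_space set \<Rightarrow> 'a set set \<Rightarrow> bool" where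
  "borel_partition S P \<longleftrightarrow> finite P \<and> disjoint P \<and> \<Union>P = S \<and> P \<subseteq> sets (borel_on S)"

definition misiurewicz_class :: "(nat \<Rightarrow> 'a::metric_space set) \<Rightarrow> (nat \<Rightarrow> 'a measure) \<Rightarrow> (nat \<Rightarrow> 'a set set) set" where
  "misiurewicz_class X \<mu> = {P.
     (\<forall>n. borel_partition (X n) (P n)) \<and> (\<exists>K::nat. \<forall>n. card (P n) \<le> K) \<and>
     (\<forall>\<epsilon>>0. \<exists>\<delta>>0. \<exists>C. \<forall>n. \<forall>A\<in>P n.
         compact (C n A) \<and> C n A \<subseteq> A \<and> measure (\<mu> n) (A - C n A) \<le> \<epsilon> \<and>
         (\<forall>B\<in>P n. A \<noteq> B \<longrightarrow> (\<forall>x\<in>C n A. \<forall>y\<in>C n B. \<delta> \<le> dist x y)))}"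

definition preimage_partitions :: "(nat \<Rightarrow> 'a set) \<Rightarrow> (nat \<Rightarrow> 'a \<Rightarrow> 'b) \<Rightarrow> (nat \<Rightarrow> 'b set set) \<Rightarrow> nat \<Rightarrow> 'a set set" where
  "preimage_partitions X \<pi> Q n = (\<lambda>B. X n \<inter> \<pi> n -` B) ` Q n"

definition part_entropy :: "'a measure \<Rightarrow> 'a set set \<Rightarrow> real" where
  "part_entropy M P = - (\<Sum>A\<in>P. measure M A * ln (measure M A))"

primrec fcomp :: "(nat \<Rightarrow> 'a \<Rightarrow> 'a) \<Rightarrow> nat \<Rightarrow> 'a \<Rightarrow> 'a" where
  "fcomp f 0 = id"
| "fcomp f (Suc i) = f i \<circ> fcomp f i"

definition join_partition :: "(nat \<Rightarrow> 'a set) \<Rightarrow> (nat \<Rightarrow> 'a \<Rightarrow> 'a) \<Rightarrow> (nat \<Rightarrow> 'a set set) \<Rightarrow> nat \<Rightarrow> 'a set set" where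
  "join_partition X f P n = {X 0 \<inter> (\<Inter>i<n. fcomp f i -` A i) | A. \<forall>i<n. A i \<in> P i}"

definition seq_entropy :: "(nat \<Rightarrow> 'a set) \<Rightarrow> (nat \<Rightarrow> 'a measure) \<Rightarrow> (nat \<Rightarrow> 'a \<Rightarrow> 'a) \<Rightarrow> (nat \<Rightarrow> 'a set set) \<Rightarrow> ereal" where
  "seq_entropy X \<mu> f P = limsup (\<lambda>n. ereal (part_entropy (\<mu> 0) (join_partition X f P n) / real n))"

definition misiurewicz_entropy :: "(nat \<Rightarrow> 'a::metric_space set) \<Rightarrow> (nat \<Rightarrow> 'a measure) \<Rightarrow> (nat \<Rightarrow> 'a \<Rightarrow> 'a) \<Rightarrow> ereal" where
  "misiurewicz_entropy X \<mu> f = (SUP P\<in>misiurewicz_class X \<mu>. seq_entropy X \<mu> f P)"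

end

theory Submission
  imports Defs
begin


lemma eq_cont: "equicontinuous_seq X h \<Longrightarrow> continuous_on (X n) (h n)"
  unfolding equicontinuous_seq_def continuous_on_iff by (metis dist_commute)

lemma meas_cont: "continuous_on S h \<Longrightarrow> h ` S \<subseteq> T \<Longrightarrow> h \<in> measurable (borel_on S) (borel_on T)"
  by (intro measurable_restrict_space2 borel_measurable_continuous_on_restrict)
     (auto simp: space_restrict_space)

lemma space_borel_on[simp]: "space (borel_on S) = S"
  by (simp add: space_restrict_space)

lemma inv_space: "invariant_measures X f \<mu> \<Longrightarrow> space (\<mu> n) = X n"
  unfolding invariant_measures_def by (metis sets_eq_imp_space_eq space_borel_on)

lemma inv_meas: "invariant_measures X f \<mu> \<Longrightarrow> measurable (\<mu> n) N = measurable (borel_on (X n)) N"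
  unfolding invariant_measures_def by (intro measurable_cong_sets) auto

lemma part1:
  assumes X: "topological_NDS X f"
    and Y: "topological_NDS Y g"
    and \<pi>_maps: "\<And>n. \<pi> n ` X n \<subseteq> Y n"
    and \<pi>_eq: "equicontinuous_seq X \<pi>"
    and \<pi>_comm: "\<And>n x. x \<in> X n \<Longrightarrow> \<pi> (Suc n) (f n x) = g n (\<pi> n x)"
    and \<mu>: "invariant_measures X f \<mu>"
    and \<nu>_def: "\<And>n. \<nu> n = distr (\<mu> n) (borel_on (Y n)) (\<pi> n)"
  shows "invariant_measures Y g \<nu>"
  unfolding invariant_measures_def
proof (intro allI conjI)
  fix n
  have pm: "\<pi> m \<in> measurable (\<mu> m) (borel_on (Y m))" for m
    using inv_meas[OF \<mu>] meas_cont[OF eq_cont[OF \<pi>_eq] \<pi>_maps] by auto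
  have fm: "f m \<in> measurable (\<mu> m) (borel_on (X (Suc m)))" for m
    using inv_meas[OF \<mu>] meas_cont[of "X m" "f m" "X (Suc m)"] X
    unfolding topological_NDS_def by auto
  have gm: "g m \<in> measurable (borel_on (Y m)) (borel_on (Y (Suc m)))" for m
    using meas_cont[of "Y m" "g m" "Y (Suc m)"] Y
    unfolding topological_NDS_def by auto
  have ps: "prob_space (\<mu> m)" for m using \<mu> unfolding invariant_measures_def by auto
  show "prob_space (\<nu> n)" unfolding \<nu>_def
    by (rule prob_space.prob_space_distr[OF ps pm])
  show "sets (\<nu> n) = sets (borel_on (Y n))" unfolding \<nu>_def by simp
  have mu: "\<mu> (Suc n) = distr (\<mu> n) (borel_on (X (Suc n))) (f n)"
    using \<mu> unfolding invariant_measures_def by auto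
  have "distr (\<nu> n) (borel_on (Y (Suc n))) (g n) = distr (\<mu> n) (borel_on (Y (Suc n))) (g n \<circ> \<pi> n)"
    unfolding \<nu>_def by (rule distr_distr[OF gm pm])
  also have "\<dots> = distr (\<mu> n) (borel_on (Y (Suc n))) (\<pi> (Suc n) \<circ> f n)"
    by (rule distr_cong) (auto simp: inv_space[OF \<mu>] \<pi>_comm)
  also have "\<dots> = distr (distr (\<mu> n) (borel_on (X (Suc n))) (f n)) (borel_on (Y (Suc n))) (\<pi> (Suc n))"
    using pm[of "Suc n"] inv_meas[OF \<mu>, of "Suc n"]
    by (intro distr_distr[symmetric] fm) auto
  also have "\<dots> = \<nu> (Suc n)" unfolding \<nu>_def mu ..
  finally show "distr (\<nu> n) (borel_on (Y (Suc n))) (g n) = \<nu> (Suc n)" .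
qed

lemma part2:
  assumes X: "topological_NDS X f"
    and Y: "topological_NDS Y g"
    and \<pi>_maps: "\<And>n. \<pi> n ` X n \<subseteq> Y n"
    and \<pi>_eq: "equicontinuous_seq X \<pi>"
    and \<mu>: "invariant_measures X f \<mu>"
    and \<nu>_def: "\<And>n. \<nu> n = distr (\<mu> n) (borel_on (Y n)) (\<pi> n)"
    and Q: "Q \<in> misiurewicz_class Y \<nu>"
  shows "preimage_partitions X \<pi> Q \<in> misiurewicz_class X \<mu>"
proof -
  define P where "P = preimage_partitions X \<pi> Q"
  have pm: "\<pi> m \<in> measurable (borel_on (X m)) (borel_on (Y m))" for m
    using meas_cont[OF eq_cont[OF \<pi>_eq] \<pi>_maps] by auto
  have Qp: "\<And>n. borel_partition (Y n) (Q n)" and K: "\<exists>K::nat. \<forall>n. card (Q n) \<le> K"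
    and Qe: "\<And>\<epsilon>. \<epsilon>>0 \<Longrightarrow> \<exists>\<delta>>0. \<exists>C. \<forall>n. \<forall>A\<in>Q n.
         compact (C n A) \<and> C n A \<subseteq> A \<and> measure (\<nu> n) (A - C n A) \<le> \<epsilon> \<and>
         (\<forall>B\<in>Q n. A \<noteq> B \<longrightarrow> (\<forall>x\<in>C n A. \<forall>y\<in>C n B. \<delta> \<le> dist x y))"
    using Q unfolding misiurewicz_class_def by auto
  have Pn: "P n = (\<lambda>B. X n \<inter> \<pi> n -` B) ` Q n" for n
    unfolding P_def preimage_partitions_def by simp
  have preB: "X n \<inter> \<pi> n -` B \<in> sets (borel_on (X n))" if "B \<in> sets (borel_on (Y n))" for n B
    using measurable_sets[OF pm that] by (simp add: Int_commute)
  have part: "borel_partition (X n) (P n)" for n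
  proof -
    have q: "finite (Q n)" "disjoint (Q n)" "\<Union>(Q n) = Y n" "Q n \<subseteq> sets (borel_on (Y n))"
      using Qp[of n] unfolding borel_partition_def by auto
    show ?thesis unfolding borel_partition_def Pn
    proof (intro conjI)
      show "finite ((\<lambda>B. X n \<inter> \<pi> n -` B) ` Q n)" using q by simp
      show "disjoint ((\<lambda>B. X n \<inter> \<pi> n -` B) ` Q n)"
        using q(2) unfolding disjoint_def by blast
      show "\<Union>((\<lambda>B. X n \<inter> \<pi> n -` B) ` Q n) = X n"
        using q(3) \<pi>_maps[of n] by blast
      show "(\<lambda>B. X n \<inter> \<pi> n -` B) ` Q n \<subseteq> sets (borel_on (X n))"
        using q(4) preB by blast
    qed
  qed
  have card: "\<exists>K::nat. \<forall>n. card (P n) \<le> K"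
  proof -
    obtain K where "\<forall>n. card (Q n) \<le> K" using K by blast
    then show ?thesis unfolding Pn by (meson card_image_le dual_order.trans Qp borel_partition_def)
  qed
  have eps: "\<exists>\<delta>>0. \<exists>C. \<forall>n. \<forall>A\<in>P n.
         compact (C n A) \<and> C n A \<subseteq> A \<and> measure (\<mu> n) (A - C n A) \<le> \<epsilon> \<and>
         (\<forall>B\<in>P n. A \<noteq> B \<longrightarrow> (\<forall>x\<in>C n A. \<forall>y\<in>C n B. \<delta> \<le> dist x y))" if epos: "\<epsilon> > 0" for \<epsilon>
  proof -
    obtain \<delta> C where d: "\<delta> > 0" and Call: "\<forall>n. \<forall>A\<in>Q n.
         compact (C n A) \<and> C n A \<subseteq> A \<and> measure (\<nu> n) (A - C n A) \<le> \<epsilon> \<and>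
         (\<forall>B\<in>Q n. A \<noteq> B \<longrightarrow> (\<forall>x\<in>C n A. \<forall>y\<in>C n B. \<delta> \<le> dist x y))"
      using Qe[OF epos] by (elim exE conjE) (rule that; assumption)
    have C: "\<And>n A. A \<in> Q n \<Longrightarrow>
         compact (C n A) \<and> C n A \<subseteq> A \<and> measure (\<nu> n) (A - C n A) \<le> \<epsilon> \<and>
         (\<forall>B\<in>Q n. A \<noteq> B \<longrightarrow> (\<forall>x\<in>C n A. \<forall>y\<in>C n B. \<delta> \<le> dist x y))"
      using Call by blast
    obtain \<delta>' where d': "\<delta>' > 0" and ec: "\<And>n x y. x \<in> X n \<Longrightarrow> y \<in> X n \<Longrightarrow> dist x y < \<delta>' \<Longrightarrow> dist (\<pi> n x) (\<pi> n y) < \<delta>"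
    proof -
      from \<pi>_eq d obtain \<delta>' where "\<delta>' > 0" "\<forall>n. \<forall>x\<in>X n. \<forall>y\<in>X n. dist x y < \<delta>' \<longrightarrow> dist (\<pi> n x) (\<pi> n y) < \<delta>"
        unfolding equicontinuous_seq_def by blast
      then show ?thesis using that by blast
    qed
    define ch where "ch n A = (SOME B. B \<in> Q n \<and> A = X n \<inter> \<pi> n -` B)" for n A
    have ch: "ch n A \<in> Q n \<and> A = X n \<inter> \<pi> n -` ch n A" if "A \<in> P n" for n A
    proof -
      from that obtain B where "B \<in> Q n" "A = X n \<inter> \<pi> n -` B" unfolding Pn by blast
      then show ?thesis unfolding ch_def by (rule someI[of "\<lambda>B. B \<in> Q n \<and> A = X n \<inter> \<pi> n -` B", OF conjI])
    qed
    define C' where "C' n A = X n \<inter> \<pi> n -` C n (ch n A)" for n A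
    show ?thesis
    proof (intro exI[of _ \<delta>'] conjI d' exI[of _ C'] allI ballI impI)
      fix n A assume A: "A \<in> P n"
      note chA = ch[OF A]
      note CA = C[OF chA[THEN conjunct1]]
      have cX: "compact (X n)" using X unfolding topological_NDS_def by auto
      show "compact (C' n A)" unfolding C'_def
        by (rule closedin_compact[OF cX continuous_closedin_preimage[OF eq_cont[OF \<pi>_eq]]])
           (use CA compact_imp_closed in blast)
      show "C' n A \<subseteq> A" unfolding C'_def using CA chA by blast
      have "A - C' n A = X n \<inter> \<pi> n -` (ch n A - C n (ch n A))"
        unfolding C'_def using chA by blast
      moreover have "ch n A - C n (ch n A) \<in> sets (borel_on (Y n))"
      proof -
        have "ch n A \<in> sets (borel_on (Y n))" using chA Qp[of n] unfolding borel_partition_def by auto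
        moreover have "C n (ch n A) \<in> sets (borel_on (Y n))"
        proof -
          have "ch n A \<subseteq> Y n" using chA Qp[of n] unfolding borel_partition_def by auto
          then have "C n (ch n A) = Y n \<inter> C n (ch n A)" using CA by blast
          moreover have "C n (ch n A) \<in> sets borel" using CA by (simp add: borel_closed compact_imp_closed)
          ultimately show ?thesis unfolding sets_restrict_space by blast
        qed
        ultimately show ?thesis by auto
      qed
      ultimately have "measure (\<mu> n) (A - C' n A) = measure (\<nu> n) (ch n A - C n (ch n A))"
        unfolding \<nu>_def using pm[of n] inv_meas[OF \<mu>, of n] inv_space[OF \<mu>, of n]
        by (subst measure_distr) (auto simp: Int_commute)
      then show "measure (\<mu> n) (A - C' n A) \<le> \<epsilon>" using CA by simp
      fix B x y assume B: "B \<in> P n" and AB: "A \<noteq> B" and x: "x \<in> C' n A" and y: "y \<in> C' n B"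
      note chB = ch[OF B]
      have "ch n A \<noteq> ch n B" using chA chB AB by metis
      then have "\<delta> \<le> dist (\<pi> n x) (\<pi> n y)" using CA chB x y unfolding C'_def by blast
      then show "\<delta>' \<le> dist x y" using ec[of x n y] x y unfolding C'_def by force
    qed
  qed
  show ?thesis unfolding P_def[symmetric] misiurewicz_class_def using part card eps by blast
qed


lemma fcomp_comm:
  assumes X: "topological_NDS X f"
    and \<pi>_comm: "\<And>n x. x \<in> X n \<Longrightarrow> \<pi> (Suc n) (f n x) = g n (\<pi> n x)"
    and x: "x \<in> X 0"
  shows "fcomp f i x \<in> X i \<and> \<pi> i (fcomp f i x) = fcomp g i (\<pi> 0 x)"
proof (induction i)
  case 0 then show ?case using x by simp
next
  case (Suc i)
  then show ?case using X \<pi>_comm[of "fcomp f i x" i] unfolding topological_NDS_def by auto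
qed

lemma fcomp_cont:
  assumes Y: "topological_NDS Y g"
  shows "continuous_on (Y 0) (fcomp g i) \<and> fcomp g i ` Y 0 \<subseteq> Y i"
proof (induction i)
  case 0 then show ?case by (simp add: continuous_on_id)
next
  case (Suc i)
  have c: "continuous_on (Y i) (g i)" "g i ` Y i \<subseteq> Y (Suc i)" using Y unfolding topological_NDS_def by auto
  have "continuous_on (Y 0) (g i \<circ> fcomp g i)"
    using Suc c by (intro continuous_on_compose) (auto intro: continuous_on_subset)
  then show ?case using Suc c by auto
qed

lemma join_sets:
  assumes Y: "topological_NDS Y g" and Qp: "\<And>n. borel_partition (Y n) (Q n)"
    and S: "S \<in> join_partition Y g Q n"
  shows "S \<in> sets (borel_on (Y 0))"
proof -
  obtain A where A: "\<forall>i<n. A i \<in> Q i" and SA: "S = Y 0 \<inter> (\<Inter>i<n. fcomp g i -` A i)"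
    using S unfolding join_partition_def by blast
  have m: "fcomp g i -` A i \<inter> Y 0 \<in> sets (borel_on (Y 0))" if il: "i < n" for i
  proof -
    have c: "continuous_on (Y 0) (fcomp g i)" "fcomp g i ` Y 0 \<subseteq> Y i" using fcomp_cont[OF Y, of i] by auto
    have fm: "fcomp g i \<in> measurable (borel_on (Y 0)) (borel_on (Y i))"
      by (rule meas_cont[OF c])
    have "A i \<in> sets (borel_on (Y i))" using A il Qp[of i] unfolding borel_partition_def by blast
    from measurable_sets[OF fm this] show ?thesis by simp
  qed
  show ?thesis
  proof (cases "n = 0")
    case True
    then have "S = space (borel_on (Y 0))" using SA by simp
    then show ?thesis using sets.top[of "borel_on (Y 0)"] by (simp only:)
  next
    case False
    have "S = (\<Inter>i\<in>{..<n}. fcomp g i -` A i \<inter> Y 0)" using SA False by blast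
    also have "\<dots> \<in> sets (borel_on (Y 0))"
      by (rule sets.finite_INT) (use False m in auto)
    finally show ?thesis .
  qed
qed

lemma part3:
  assumes X: "topological_NDS X f"
    and Y: "topological_NDS Y g"
    and \<pi>_maps: "\<And>n. \<pi> n ` X n \<subseteq> Y n"
    and \<pi>_eq: "equicontinuous_seq X \<pi>"
    and \<pi>_comm: "\<And>n x. x \<in> X n \<Longrightarrow> \<pi> (Suc n) (f n x) = g n (\<pi> n x)"
    and \<mu>: "invariant_measures X f \<mu>"
    and \<nu>_def: "\<And>n. \<nu> n = distr (\<mu> n) (borel_on (Y n)) (\<pi> n)"
    and Qp: "\<And>n. borel_partition (Y n) (Q n)"
  shows "part_entropy (\<nu> 0) (join_partition Y g Q n)
       = part_entropy (\<mu> 0) (join_partition X f (preimage_partitions X \<pi> Q) n)"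
proof -
  define \<Phi> where "\<Phi> S = X 0 \<inter> \<pi> 0 -` S" for S
  define cell where "cell A = Y 0 \<inter> (\<Inter>i<n. fcomp g i -` A i)" for A
  define JY where "JY = join_partition Y g Q n"
  define JX where "JX = join_partition X f (preimage_partitions X \<pi> Q) n"
  have JYe: "JY = {cell A | A. \<forall>i<n. A i \<in> Q i}" unfolding JY_def join_partition_def cell_def by simp
  have Phicell: "\<Phi> (cell A) = X 0 \<inter> (\<Inter>i<n. fcomp f i -` (X i \<inter> \<pi> i -` A i))" for A
  proof -
    have "x \<in> \<Phi> (cell A) \<longleftrightarrow> x \<in> X 0 \<inter> (\<Inter>i<n. fcomp f i -` (X i \<inter> \<pi> i -` A i))" for x
    proof (cases "x \<in> X 0")
      case True
      have "\<pi> 0 x \<in> Y 0" using True \<pi>_maps by blast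
      then show ?thesis using True fcomp_comm[of X f \<pi> g x, OF X \<pi>_comm True] unfolding \<Phi>_def cell_def by simp
    qed (auto simp: \<Phi>_def)
    then show ?thesis by blast
  qed
  have img: "\<Phi> ` JY = JX"
  proof
    show "\<Phi> ` JY \<subseteq> JX"
    proof
      fix T assume "T \<in> \<Phi> ` JY"
      then obtain A where A: "\<forall>i<n. A i \<in> Q i" and T: "T = \<Phi> (cell A)" unfolding JYe by blast
      show "T \<in> JX" unfolding JX_def join_partition_def T Phicell
        using A by (intro CollectI exI[of _ "\<lambda>i. X i \<inter> \<pi> i -` A i"] conjI refl) (simp add: preimage_partitions_def)
    qed
    show "JX \<subseteq> \<Phi> ` JY"
    proof
      fix T assume "T \<in> JX"
      then obtain A' where A': "\<forall>i<n. A' i \<in> preimage_partitions X \<pi> Q i"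
        and T: "T = X 0 \<inter> (\<Inter>i<n. fcomp f i -` A' i)"
        unfolding JX_def join_partition_def by blast
      have "\<forall>i. \<exists>B. i < n \<longrightarrow> B \<in> Q i \<and> A' i = X i \<inter> \<pi> i -` B"
        using A' unfolding preimage_partitions_def by blast
      then obtain B where B: "\<And>i. i < n \<Longrightarrow> B i \<in> Q i \<and> A' i = X i \<inter> \<pi> i -` B i" by metis
      have "T = \<Phi> (cell B)" unfolding T Phicell using B by auto
      moreover have "cell B \<in> JY" unfolding JYe using B by blast
      ultimately show "T \<in> \<Phi> ` JY" by blast
    qed
  qed
  have fin: "finite JY"
  proof -
    have "JY \<subseteq> cell ` (\<Pi>\<^sub>E i\<in>{..<n}. Q i)"
    proof
      fix S assume "S \<in> JY"
      then obtain A where A: "\<forall>i<n. A i \<in> Q i" and S: "S = cell A" unfolding JYe by blast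
      have "cell A = cell (restrict A {..<n})" unfolding cell_def by auto
      moreover have "restrict A {..<n} \<in> (\<Pi>\<^sub>E i\<in>{..<n}. Q i)" using A by auto
      ultimately show "S \<in> cell ` (\<Pi>\<^sub>E i\<in>{..<n}. Q i)" using S by blast
    qed
    moreover have "finite (\<Pi>\<^sub>E i\<in>{..<n}. Q i)"
      using Qp unfolding borel_partition_def by (intro finite_PiE) auto
    ultimately show ?thesis by (meson finite_imageI finite_subset)
  qed
  have disj: "S \<inter> S' = {}" if SS: "S \<in> JY" "S' \<in> JY" "S \<noteq> S'" for S S'
  proof (rule ccontr)
    assume "S \<inter> S' \<noteq> {}"
    then obtain y where y: "y \<in> S" "y \<in> S'" by blast
    obtain A where A: "\<forall>i<n. A i \<in> Q i" and S: "S = cell A" using SS(1) unfolding JYe by blast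
    obtain A2 where A2: "\<forall>i<n. A2 i \<in> Q i" and S': "S' = cell A2" using SS(2) unfolding JYe by blast
    have "A i = A2 i" if il: "i < n" for i
    proof -
      have "fcomp g i y \<in> A i" "fcomp g i y \<in> A2 i" using y S S' il unfolding cell_def by auto
      then show ?thesis using Qp[of i] A A2 il unfolding borel_partition_def disjoint_def by blast
    qed
    then have "S = S'" unfolding S S' cell_def by auto
    then show False using SS(3) by simp
  qed
  have pm: "\<pi> 0 \<in> measurable (\<mu> 0) (borel_on (Y 0))"
    using inv_meas[OF \<mu>] meas_cont[OF eq_cont[OF \<pi>_eq] \<pi>_maps] by auto
  have meq: "measure (\<nu> 0) S = measure (\<mu> 0) (\<Phi> S)" if "S \<in> JY" for S
    unfolding \<nu>_def \<Phi>_def using join_sets[OF Y Qp that[unfolded JY_def]] pm inv_space[OF \<mu>, of 0]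
    by (subst measure_distr) (auto simp: Int_commute)
  define h where "h T = measure (\<mu> 0) T * ln (measure (\<mu> 0) T)" for T
  have "(\<Sum>T\<in>JX. h T) = (\<Sum>T\<in>\<Phi> ` JY. h T)" using img by simp
  also have "\<dots> = (\<Sum>S\<in>JY. h (\<Phi> S))"
  proof (rule sum.reindex_nontrivial[OF fin, unfolded comp_def])
    fix S S' assume "S \<in> JY" "S' \<in> JY" "S \<noteq> S'" "\<Phi> S = \<Phi> S'"
    then have "\<Phi> S = {}" using disj[of S S'] unfolding \<Phi>_def by blast
    then show "h (\<Phi> S) = 0" unfolding h_def by simp
  qed
  also have "\<dots> = (\<Sum>S\<in>JY. measure (\<nu> 0) S * ln (measure (\<nu> 0) S))"
    unfolding h_def by (intro sum.cong refl) (simp add: meq)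
  finally have calc: "(\<Sum>T\<in>JX. h T) = (\<Sum>S\<in>JY. measure (\<nu> 0) S * ln (measure (\<nu> 0) S))" .
  show ?thesis unfolding part_entropy_def JX_def[symmetric] JY_def[symmetric]
    using arg_cong[where f=uminus, OF calc[symmetric]] unfolding h_def .
qed

theorem mainTheorem8:
  fixes X :: "nat \<Rightarrow> 'a::metric_space set" and f :: "nat \<Rightarrow> 'a \<Rightarrow> 'a"
    and Y :: "nat \<Rightarrow> 'b::metric_space set" and g :: "nat \<Rightarrow> 'b \<Rightarrow> 'b"
    and \<pi> :: "nat \<Rightarrow> 'a \<Rightarrow> 'b"
    and \<mu> :: "nat \<Rightarrow> 'a measure" and \<nu> :: "nat \<Rightarrow> 'b measure"
  assumes X: "topological_NDS X f" and Xeq: "equicontinuous_seq X f"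
    and Y: "topological_NDS Y g" and Yeq: "equicontinuous_seq Y g"
    and \<pi>_maps: "\<And>n. \<pi> n ` X n \<subseteq> Y n"
    and \<pi>_eq: "equicontinuous_seq X \<pi>"
    and \<pi>_comm: "\<And>n x. x \<in> X n \<Longrightarrow> \<pi> (Suc n) (f n x) = g n (\<pi> n x)"
    and \<mu>: "invariant_measures X f \<mu>"
    and \<nu>_def: "\<And>n. \<nu> n = distr (\<mu> n) (borel_on (Y n)) (\<pi> n)"
  shows "invariant_measures Y g \<nu>
    \<and> (\<forall>Q\<in>misiurewicz_class Y \<nu>. preimage_partitions X \<pi> Q \<in> misiurewicz_class X \<mu>)
    \<and> misiurewicz_entropy Y \<nu> g \<le> misiurewicz_entropy X \<mu> f"
  proof -
  have Qp: "\<And>n. borel_partition (Y n) (Q n)" if "Q \<in> misiurewicz_class Y \<nu>" for Q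
    using that unfolding misiurewicz_class_def by blast
  have p2: "\<forall>Q\<in>misiurewicz_class Y \<nu>. preimage_partitions X \<pi> Q \<in> misiurewicz_class X \<mu>"
    using part2[OF X Y \<pi>_maps \<pi>_eq \<mu> \<nu>_def] by blast
  have "misiurewicz_entropy Y \<nu> g \<le> misiurewicz_entropy X \<mu> f"
    unfolding misiurewicz_entropy_def
  proof (rule SUP_least)
    fix Q assume Q: "Q \<in> misiurewicz_class Y \<nu>"
    have "seq_entropy Y \<nu> g Q = seq_entropy X \<mu> f (preimage_partitions X \<pi> Q)"
      unfolding seq_entropy_def
      using part3[OF X Y \<pi>_maps \<pi>_eq \<pi>_comm \<mu> \<nu>_def Qp[OF Q]] by simp
    also have "\<dots> \<le> (SUP P\<in>misiurewicz_class X \<mu>. seq_entropy X \<mu> f P)"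
      by (rule SUP_upper) (use p2 Q in blast)
    finally show "seq_entropy Y \<nu> g Q \<le> (SUP P\<in>misiurewicz_class X \<mu>. seq_entropy X \<mu> f P)" .
  qed
  then show ?thesis using part1[OF X Y \<pi>_maps \<pi>_eq \<pi>_comm \<mu> \<nu>_def] p2 by blast
qed

end
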